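(* Let $K:[0,\infty)\to(0,\infty)$ be non-increasing with $K(0)=1$, and for $\sigma>0$ let $K_\sigma(x)=K(x/\sigma)$. Let $\mathcal{X}=\{\mathbf{x}_1,\dots,\mathbf{x}_n\}\subset\mathbb{R}^d$ and let $\mathcal{C}_1,\dots,\mathcal{C}_k$ be a partition of $\mathcal{X}$ into nonempty sets. For each $l\in[k]$, suppose $\mathcal{C}_l$ is connected at distance $\delta_l$. Let $\mathbf{U}\in\mathbb{R}^{n\times n}$ have as columns the eigenvectors of the normalised Laplacian $\mathbf{L}_{\mathrm{N}}$ of the graph $\mathcal{G}=(\mathcal{X},K_\sigma)$, and let $\mathbf{D}$ be the corresponding degree matrix. Then for each $i,j\in[n]$, $l\in[k]$ with $\mathbf{x}_i,\mathbf{x}_j\in\mathcal{C}_l$, $$\|\mathbf{D}_{ii}^{-1/2}\mathbf{U}_{i,1:k}-\mathbf{D}_{jj}^{-1/2}\mathbf{U}_{j,1:k}\|\le \max_{m\in[k]} n^{1.5}k^{0.5}\sqrt{\frac{K_\sigma(d(\mathcal{C}_m,\mathcal{X}\setminus\mathcal{C}_m))}{K_\sigma(\delta_l)}}.$$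
   Context: $[n]=\{1,\dots,n\}$; $\|\cdot\|$ is the Euclidean norm. For sets $S,U\subset\mathbb{R}^d$, $d(S,U)=\inf_{\mathbf{x}\in S,\mathbf{y}\in U}\|\mathbf{x}-\mathbf{y}\|$, with $d(S,\emptyset)=\infty$. A set $S$ is connected at distance $\delta$ if there is no partition of $S$ into $S_1,S_2$ with $d(S_1,S_2)>\delta$. The graph $(\mathcal{X},K_\sigma)$ has affinity matrix $\mathbf{A}_{ij}=K_\sigma(\|\mathbf{x}_i-\mathbf{x}_j\|)$ (including $i=j$), degree matrix $\mathbf{D}=\mathrm{diag}(\sum_j\mathbf{A}_{ij})$, and normalised Laplacian $\mathbf{L}_{\mathrm{N}}=\mathbf{I}-\mathbf{D}^{-1/2}\mathbf{A}\mathbf{D}^{-1/2}$. "The eigenvectors" means an orthonormal eigenbasis arranged as columns with eigenvalues in nondecreasing order. $\mathbf{U}_{i,1:k}$ denotes the first $k$ entries of row $i$. *)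

theory Defs
  imports "HOL-Analysis.Analysis"
begin

definition set_dist_e :: "'a::metric_space set \<Rightarrow> 'a set \<Rightarrow> ereal" where
  "set_dist_e S U = (if S = {} \<or> U = {} then \<infinity>
      else ereal (INF p\<in>S \<times> U. dist (fst p) (snd p)))"

definition connected_at_dist :: "'a::metric_space set \<Rightarrow> real \<Rightarrow> bool" where
  "connected_at_dist S \<delta> \<longleftrightarrow>
     \<not> (\<exists>S1 S2. S1 \<union> S2 = S \<and> S1 \<inter> S2 = {} \<and> S1 \<noteq> {} \<and> S2 \<noteq> {}
              \<and> set_dist_e S1 S2 > ereal \<delta>)"

definition Ksig :: "(real \<Rightarrow> real) \<Rightarrow> real \<Rightarrow> real \<Rightarrow> real" where
  "Ksig K \<sigma> x = K (x / \<sigma>)"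

text \<open>K_sigma evaluated at an extended-real distance; at infinity we take the limit
  value inf_{x>=0} K(x) (only relevant when a cluster is all of X).\<close>
definition Ksig_e :: "(real \<Rightarrow> real) \<Rightarrow> real \<Rightarrow> ereal \<Rightarrow> real" where
  "Ksig_e K \<sigma> e = (case e of ereal r \<Rightarrow> Ksig K \<sigma> r | _ \<Rightarrow> (INF x\<in>{0..}. K x))"

text \<open>Affinity, degree and normalised Laplacian of the graph (X, K_sigma),
  with points x 0, ..., x (n-1); matrices are functions on indices < n.\<close>
definition affinity :: "(real \<Rightarrow> real) \<Rightarrow> real \<Rightarrow> (nat \<Rightarrow> 'a::real_normed_vector) \<Rightarrow> nat \<Rightarrow> nat \<Rightarrow> real" where
  "affinity K \<sigma> x i j = Ksig K \<sigma> (norm (x i - x j))"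

definition degree :: "(real \<Rightarrow> real) \<Rightarrow> real \<Rightarrow> (nat \<Rightarrow> 'a::real_normed_vector) \<Rightarrow> nat \<Rightarrow> nat \<Rightarrow> real" where
  "degree K \<sigma> x n i = (\<Sum>j<n. affinity K \<sigma> x i j)"

definition norm_laplacian :: "(real \<Rightarrow> real) \<Rightarrow> real \<Rightarrow> (nat \<Rightarrow> 'a::real_normed_vector) \<Rightarrow> nat \<Rightarrow> nat \<Rightarrow> nat \<Rightarrow> real" where
  "norm_laplacian K \<sigma> x n i j =
     (if i = j then 1 else 0) - affinity K \<sigma> x i j / (sqrt (degree K \<sigma> x n i) * sqrt (degree K \<sigma> x n j))"

definition is_sorted_eigenbasis :: "nat \<Rightarrow> (nat \<Rightarrow> nat \<Rightarrow> real) \<Rightarrow> (nat \<Rightarrow> nat \<Rightarrow> real) \<Rightarrow> (nat \<Rightarrow> real) \<Rightarrow> bool" where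
  "is_sorted_eigenbasis n L U lam \<longleftrightarrow>
     (\<forall>a<n. \<forall>b<n. (\<Sum>i<n. U i a * U i b) = (if a = b then 1 else 0)) \<and>
     (\<forall>a<n. \<forall>i<n. (\<Sum>j<n. L i j * U j a) = lam a * U i a) \<and>
     (\<forall>a b. a \<le> b \<longrightarrow> b < n \<longrightarrow> lam a \<le> lam b)"

end

theory Submission
  imports Defs "HOL-Library.Transitive_Closure_Table"
begin

lemma nontriv_sol:
  fixes M :: "nat \<Rightarrow> nat \<Rightarrow> real"
  assumes "finite S" "p < card S"
  shows "\<exists>c. (\<exists>m\<in>S. c m \<noteq> 0) \<and> (\<forall>r<p. (\<Sum>m\<in>S. M r m * c m) = 0)"
  using assms
proof (induction p arbitrary: S M)
  case 0
  then obtain m where "m \<in> S" by (metis card.empty ex_in_conv less_irrefl)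
  then show ?case by (rule_tac x="\<lambda>_. 1" in exI) auto
next
  case (Suc p)
  show ?case
  proof (cases "\<forall>m\<in>S. M p m = 0")
    case True
    from Suc.IH[of S M] Suc.prems obtain c where c: "\<exists>m\<in>S. c m \<noteq> 0" "\<forall>r<p. (\<Sum>m\<in>S. M r m * c m) = 0" by auto
    then show ?thesis
      apply (rule_tac x=c in exI) using True by (auto simp: less_Suc_eq)
  next
    case False
    then obtain m0 where m0: "m0 \<in> S" "M p m0 \<noteq> 0" by auto
    define S' where "S' = S - {m0}"
    define M' where "M' r m = M r m - M r m0 * M p m / M p m0" for r m
    have "finite S'" "p < card S'" using Suc.prems m0 by (auto simp: S'_def)
    from Suc.IH[OF this, of M'] obtain c' where c': "\<exists>m\<in>S'. c' m \<noteq> 0" "\<forall>r<p. (\<Sum>m\<in>S'. M' r m * c' m) = 0" by blast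
    define c where "c = c'(m0 := - (\<Sum>m\<in>S'. M p m * c' m) / M p m0)"
    have split: "(\<Sum>m\<in>S. f m) = f m0 + (\<Sum>m\<in>S'. f m)" for f :: "nat \<Rightarrow> real"
      using m0 Suc.prems(1) unfolding S'_def by (simp add: sum.remove)
    have cS': "(\<Sum>m\<in>S'. g m * c m) = (\<Sum>m\<in>S'. g m * c' m)" for g
      by (rule sum.cong) (auto simp: c_def S'_def)
    show ?thesis
    proof (rule exI[of _ c], intro conjI allI impI)
      show "\<exists>m\<in>S. c m \<noteq> 0" using c' by (auto simp: c_def S'_def)
      fix r assume "r < Suc p"
      then consider "r = p" | "r < p" by linarith
      then show "(\<Sum>m\<in>S. M r m * c m) = 0"
      proof cases
        case 1 then show ?thesis using m0 by (simp add: split cS') (simp add: c_def)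
      next
        case 2
        have "(\<Sum>m\<in>S'. M' r m * c' m) = (\<Sum>m\<in>S'. M r m * c' m) - M r m0 / M p m0 * (\<Sum>m\<in>S'. M p m * c' m)"
          by (simp add: M'_def sum_subtractf sum_distrib_left algebra_simps)
        then show ?thesis using c'(2) 2 m0 by (simp add: split cS') (simp add: c_def field_simps)
      qed
    qed
  qed
qed

lemma path_cs:
  fixes \<phi> :: "nat \<Rightarrow> real"
  assumes "rtrancl_path R x ps z"
  shows "(\<phi> x - \<phi> z)^2 \<le> real (length ps) * (\<Sum>e\<leftarrow>zip (x#ps) ps. (\<phi> (fst e) - \<phi> (snd e))^2)"
  using assms
proof induction
  case (base x) then show ?case by simp
next
  case (step x y ys z)
  define a where "a = \<phi> x - \<phi> y"
  define b where "b = \<phi> y - \<phi> z"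
  define T where "T = (\<Sum>e\<leftarrow>zip (y#ys) ys. (\<phi> (fst e) - \<phi> (snd e))^2)"
  define m where "m = real (length ys)"
  have T0: "T \<ge> 0" unfolding T_def by (rule sum_list_nonneg) auto
  have hb: "b^2 \<le> m*T" using step.IH by (simp add: b_def m_def T_def)
  have m0: "m \<ge> 0" by (simp add: m_def)
  have key: "(a+b)^2 \<le> (1+m)*(a^2+T)"
  proof (cases "m = 0")
    case True
    then have "b^2 \<le> 0" using hb by simp
    then have "b = 0" by (metis zero_eq_power2 order_antisym zero_le_power2)
    then show ?thesis using True T0 by simp
  next
    case False
    then have mp: "m > 0" using m0 by simp
    have "m * ((1+m)*(a^2+T) - (a+b)^2) = (m*a-b)^2 + (m*T - b^2) + m*(m*T - b^2)"
      by (simp add: algebra_simps power2_eq_square)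
    also have "\<dots> \<ge> 0" using hb mp by (simp add: add_nonneg_nonneg)
    finally have "m * ((1+m)*(a^2+T) - (a+b)^2) \<ge> 0" .
    then have "(1+m)*(a^2+T) - (a+b)^2 \<ge> 0" using mp by (simp add: zero_le_mult_iff)
    then show ?thesis by simp
  qed
  have "(\<phi> x - \<phi> z) = a + b" by (simp add: a_def b_def)
  moreover have "real (length (y#ys)) * (\<Sum>e\<leftarrow>zip (x#y#ys) (y#ys). (\<phi> (fst e) - \<phi> (snd e))^2) = (1+m)*(a^2+T)"
    by (simp add: m_def a_def T_def)
  ultimately show ?case using key by simp
qed

lemma path_edges:
  assumes "rtrancl_path R x ps z" "e \<in> set (zip (x#ps) ps)"
  shows "R (fst e) (snd e)"
  using assms by induction auto

lemma zip_rev_notin: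
  assumes "distinct (x#ps)" "(p,q) \<in> set (zip (x#ps) ps)"
  shows "(q,p) \<notin> set (zip (x#ps) ps)"
proof
  let ?vs = "x#ps"
  assume "(q,p) \<in> set (zip (x#ps) ps)"
  then obtain s where s: "?vs!s = q" "ps!s = p" "s < length ps" by (auto simp: in_set_zip)
  from assms(2) obtain t where t: "?vs!t = p" "ps!t = q" "t < length ps" by (auto simp: in_set_zip)
  have a: "?vs ! Suc t = ?vs ! s" using s t by simp
  have b: "?vs ! Suc s = ?vs ! t" using s t by simp
  have l: "Suc t < length ?vs" "s < length ?vs" "Suc s < length ?vs" "t < length ?vs" using s t by auto
  from a have "Suc t = s" using nth_eq_iff_index_eq[OF assms(1) l(1) l(2)] by simp
  moreover from b have "Suc s = t" using nth_eq_iff_index_eq[OF assms(1) l(3) l(4)] by simp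
  ultimately show False by simp
qed

lemma dswap: "(\<Sum>i\<in>I. f i * (\<Sum>a\<in>J. g i a)) = (\<Sum>a\<in>J. \<Sum>i\<in>I. f i * (g i a :: real))"
  by (simp add: sum_distrib_left) (rule sum.swap)

lemma completeness:
  fixes U :: "nat \<Rightarrow> nat \<Rightarrow> real"
  assumes orth: "\<forall>a<n. \<forall>b<n. (\<Sum>i<n. U i a * U i b) = (if a = b then 1 else 0)"
    and i: "i < n"
  shows "g i = (\<Sum>a<n. (\<Sum>j<n. g j * U j a) * U i a)"
proof -
  define c where "c a = (\<Sum>j<n. g j * U j a)" for a
  define r where "r i = g i - (\<Sum>a<n. c a * U i a)" for i
  have rorth: "(\<Sum>i<n. r i * U i b) = 0" if b: "b < n" for b
  proof -
    have "(\<Sum>i<n. r i * U i b) = (\<Sum>i<n. g i * U i b) - (\<Sum>i<n. U i b * (\<Sum>a<n. c a * U i a))"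
      by (simp add: r_def right_diff_distrib sum_subtractf mult.commute)
    also have "(\<Sum>i<n. g i * U i b) = c b" by (simp add: c_def)
    also have "(\<Sum>i<n. U i b * (\<Sum>a<n. c a * U i a)) = (\<Sum>a<n. \<Sum>i<n. U i b * (c a * U i a))"
      by (rule dswap)
    also have "\<dots> = (\<Sum>a<n. c a * (\<Sum>i<n. U i a * U i b))"
      by (simp add: sum_distrib_left mult_ac)
    also have "\<dots> = (\<Sum>a<n. if a = b then c a else 0)"
      using orth b by (intro sum.cong) auto
    also have "\<dots> = c b" using b by simp
    finally show ?thesis by simp
  qed
  define M where "M i a = (if a < n then U i a else r i)" for i a
  obtain e where e: "\<exists>m\<in>{..<Suc n}. e m \<noteq> 0" "\<forall>i<n. (\<Sum>a\<in>{..<Suc n}. M i a * e a) = 0"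
    using nontriv_sol[of "{..<Suc n}" n M] by auto
  have e2: "(\<Sum>a<n. U i a * e a) + r i * e n = 0" if "i < n" for i
    using e(2) that by (simp add: M_def)
  have eb: "e b = 0" if b: "b < n" for b
  proof -
    have "0 = (\<Sum>i<n. U i b * ((\<Sum>a<n. U i a * e a) + r i * e n))" using e2 by simp
    also have "\<dots> = (\<Sum>i<n. U i b * (\<Sum>a<n. U i a * e a)) + e n * (\<Sum>i<n. r i * U i b)"
      by (simp add: distrib_left sum.distrib sum_distrib_left mult_ac)
    also have "(\<Sum>i<n. U i b * (\<Sum>a<n. U i a * e a)) = (\<Sum>a<n. \<Sum>i<n. U i b * (U i a * e a))"
      by (rule dswap)
    also have "\<dots> = (\<Sum>a<n. e a * (\<Sum>i<n. U i a * U i b))"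
      by (simp add: sum_distrib_left mult_ac)
    also have "\<dots> = (\<Sum>a<n. if a = b then e a else 0)"
      using orth b by (intro sum.cong) auto
    also have "\<dots> = e b" using b by simp
    finally show ?thesis using rorth[OF b] by simp
  qed
  then have "e n \<noteq> 0" using e(1) by (auto simp: less_Suc_eq)
  moreover have "r i * e n = 0" using e2[OF i] eb by simp
  ultimately have "r i = 0" by simp
  then show ?thesis by (simp add: r_def c_def)
qed

lemma spectral_lower:
  fixes U L :: "nat \<Rightarrow> nat \<Rightarrow> real"
  assumes orth: "\<forall>a<n. \<forall>b<n. (\<Sum>i<n. U i a * U i b) = (if a = b then 1 else 0)"
    and eig: "\<forall>a<n. \<forall>i<n. (\<Sum>j<n. L i j * U j a) = lam a * U i a"
    and sorted: "\<forall>a b. a \<le> b \<longrightarrow> b < n \<longrightarrow> lam a \<le> lam b"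
    and t: "t < n"
    and orthg: "\<forall>a<t. (\<Sum>j<n. g j * U j a) = 0"
  shows "lam t * (\<Sum>i<n. g i ^ 2) \<le> (\<Sum>i<n. g i * (\<Sum>j<n. L i j * g j))"
proof -
  define c where "c a = (\<Sum>j<n. g j * U j a)" for a
  have gexp: "g i = (\<Sum>a<n. c a * U i a)" if "i < n" for i
    using completeness[OF orth that] by (simp add: c_def)
  have Lg: "(\<Sum>j<n. L i j * g j) = (\<Sum>a<n. c a * lam a * U i a)" if i: "i < n" for i
  proof -
    have "(\<Sum>j<n. L i j * g j) = (\<Sum>j<n. L i j * (\<Sum>a<n. c a * U j a))"
      using gexp by simp
    also have "\<dots> = (\<Sum>a<n. \<Sum>j<n. L i j * (c a * U j a))"
      by (rule dswap)
    also have "\<dots> = (\<Sum>a<n. c a * (\<Sum>j<n. L i j * U j a))"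
      by (simp add: sum_distrib_left mult_ac)
    also have "\<dots> = (\<Sum>a<n. c a * lam a * U i a)"
      using eig i by (intro sum.cong) auto
    finally show ?thesis .
  qed
  have "(\<Sum>i<n. g i * (\<Sum>j<n. L i j * g j)) = (\<Sum>i<n. g i * (\<Sum>a<n. c a * lam a * U i a))"
    using Lg by simp
  also have "\<dots> = (\<Sum>a<n. \<Sum>i<n. g i * (c a * lam a * U i a))"
    by (rule dswap)
  also have "\<dots> = (\<Sum>a<n. c a * lam a * c a)"
    by (simp add: c_def sum_distrib_left mult_ac)
  finally have q: "(\<Sum>i<n. g i * (\<Sum>j<n. L i j * g j)) = (\<Sum>a<n. lam a * c a ^ 2)"
    by (simp add: power2_eq_square mult_ac)
  have "(\<Sum>i<n. g i ^ 2) = (\<Sum>i<n. g i * (\<Sum>a<n. c a * U i a))"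
    using gexp by (simp add: power2_eq_square)
  also have "\<dots> = (\<Sum>a<n. \<Sum>i<n. g i * (c a * U i a))"
    by (rule dswap)
  also have "\<dots> = (\<Sum>a<n. c a * c a)"
    by (simp add: c_def sum_distrib_left mult_ac)
  finally have nq: "(\<Sum>i<n. g i ^ 2) = (\<Sum>a<n. c a ^ 2)" by (simp add: power2_eq_square)
  have "lam t * (\<Sum>a<n. c a ^ 2) = (\<Sum>a<n. lam t * c a ^ 2)" by (simp add: sum_distrib_left)
  also have "\<dots> \<le> (\<Sum>a<n. lam a * c a ^ 2)"
  proof (rule sum_mono)
    fix a assume a: "a \<in> {..<n}"
    show "lam t * c a ^ 2 \<le> lam a * c a ^ 2"
    proof (cases "a < t")
      case True then show ?thesis using orthg by (simp add: c_def)
    next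
      case False then show ?thesis using sorted a by (intro mult_right_mono) auto
    qed
  qed
  finally show ?thesis using q nq by simp
qed

lemma rayleigh:
  fixes A L :: "nat \<Rightarrow> nat \<Rightarrow> real" and d g :: "nat \<Rightarrow> real"
  assumes dA: "\<forall>p<n. d p = (\<Sum>q<n. A p q)"
    and dpos: "\<forall>p<n. d p > 0"
    and sym: "\<forall>p q. A p q = A q p"
    and Ldef: "\<forall>i j. L i j = (if i = j then 1 else 0) - A i j / (sqrt (d i) * sqrt (d j))"
  shows "(\<Sum>i<n. g i * (\<Sum>j<n. L i j * g j)) =
         (\<Sum>p<n. \<Sum>q<n. A p q * (g p / sqrt (d p) - g q / sqrt (d q))^2) / 2"
proof -
  define h where "h p = g p / sqrt (d p)" for p
  have gh: "g p = sqrt (d p) * h p" if "p < n" for p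
  proof -
    have "sqrt (d p) > 0" using dpos that by simp
    then show ?thesis by (simp add: h_def)
  qed
  have row: "g i * (\<Sum>j<n. L i j * g j) = (\<Sum>j<n. A i j * (h i ^ 2 - h i * h j))" if i: "i < n" for i
  proof -
    have si: "sqrt (d i) > 0" using dpos i by simp
    have trm: "L i j * g j = (if i = j then g j else 0) - A i j * h j / sqrt (d i)" if j: "j < n" for j
    proof -
      have sj: "sqrt (d j) > 0" using dpos j by simp
      have "L i j * g j = (if i = j then g j else 0) - A i j * (g j / sqrt (d j)) / sqrt (d i)"
        unfolding Ldef[rule_format] using si sj by (simp add: field_simps)
      then show ?thesis by (simp add: h_def)
    qed
    have "(\<Sum>j<n. L i j * g j) = (\<Sum>j<n. (if i = j then g j else 0) - A i j * h j / sqrt (d i))"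
      using trm by (intro sum.cong) auto
    also have "\<dots> = g i - (\<Sum>j<n. A i j * h j) / sqrt (d i)"
      using i by (simp add: sum_subtractf sum_divide_distrib)
    finally have "g i * (\<Sum>j<n. L i j * g j) = g i * g i - (g i / sqrt (d i)) * (\<Sum>j<n. A i j * h j)"
      by (simp add: right_diff_distrib)
    also have "g i / sqrt (d i) = h i" by (simp add: h_def)
    also have "g i * g i = d i * h i ^ 2"
      using gh[OF i] si by (simp add: power2_eq_square algebra_simps)
    also have "d i * h i ^ 2 = (\<Sum>j<n. A i j * h i ^ 2)"
      using dA i by (simp add: sum_distrib_right)
    finally show ?thesis by (simp add: sum_subtractf sum_distrib_left algebra_simps)
  qed
  have swap: "(\<Sum>p<n. \<Sum>q<n. A p q * h q ^ 2) = (\<Sum>p<n. \<Sum>q<n. A p q * h p ^ 2)"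
    by (subst sum.swap) (simp add: sym)
  have e1: "(\<Sum>i<n. g i * (\<Sum>j<n. L i j * g j)) = (\<Sum>p<n. \<Sum>q<n. A p q * (h p ^ 2 - h p * h q))"
    using row by simp
  have e2: "(\<Sum>p<n. \<Sum>q<n. A p q * (h p - h q)^2) =
     (\<Sum>p<n. \<Sum>q<n. A p q * (h p ^ 2 - h p * h q)) + (\<Sum>p<n. \<Sum>q<n. A p q * (h q ^ 2 - h p * h q))"
    by (simp add: sum.distrib[symmetric] power2_diff algebra_simps)
  have e3: "(\<Sum>p<n. \<Sum>q<n. A p q * (h q ^ 2 - h p * h q)) = (\<Sum>p<n. \<Sum>q<n. A p q * (h p ^ 2 - h p * h q))"
    using swap by (simp add: right_diff_distrib sum_subtractf)
  show ?thesis using e1 e2 e3 by (simp add: h_def)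
qed

lemma inf_in_finite:
  fixes f :: "'b \<Rightarrow> real"
  assumes "finite T" "T \<noteq> {}"
  shows "(INF p\<in>T. f p) \<in> f ` T"
  using assms by (simp add: cInf_eq_Min)

theorem lemma2:
  fixes K :: "real \<Rightarrow> real" and \<sigma> :: real
    and n k :: nat and x :: "nat \<Rightarrow> 'a::euclidean_space"
    and C :: "nat \<Rightarrow> 'a set" and \<delta> :: "nat \<Rightarrow> real"
    and U :: "nat \<Rightarrow> nat \<Rightarrow> real" and lam :: "nat \<Rightarrow> real"
  assumes K_pos: "\<And>t. t \<ge> 0 \<Longrightarrow> K t > 0"
    and K_mono: "\<And>s t. 0 \<le> s \<Longrightarrow> s \<le> t \<Longrightarrow> K t \<le> K s"
    and K0: "K 0 = 1"
    and sigma_pos: "\<sigma> > 0"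
    and x_distinct: "inj_on x {..<n}"
    and C_nonempty: "\<And>l. l < k \<Longrightarrow> C l \<noteq> {}"
    and C_disjoint: "\<And>l l'. l < k \<Longrightarrow> l' < k \<Longrightarrow> l \<noteq> l' \<Longrightarrow> C l \<inter> C l' = {}"
    and C_cover: "(\<Union>l<k. C l) = x ` {..<n}"
    and delta_nonneg: "\<And>l. l < k \<Longrightarrow> \<delta> l \<ge> 0"
    and C_conn: "\<And>l. l < k \<Longrightarrow> connected_at_dist (C l) (\<delta> l)"
    and U_eig: "is_sorted_eigenbasis n (norm_laplacian K \<sigma> x n) U lam"
    and i_lt: "i < n" and j_lt: "j < n" and l_lt: "l < k"
    and xi: "x i \<in> C l" and xj: "x j \<in> C l"
  shows "sqrt (\<Sum>a<k. (U i a / sqrt (degree K \<sigma> x n i) - U j a / sqrt (degree K \<sigma> x n j))\<^sup>2)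
     \<le> Max ((\<lambda>m. real n powr 1.5 * real k powr 0.5 *
              sqrt (Ksig_e K \<sigma> (set_dist_e (C m) (x ` {..<n} - C m)) / Ksig K \<sigma> (\<delta> l))) ` {..<k})"
proof -
  define A where "A = affinity K \<sigma> x"
  define d where "d = degree K \<sigma> x n"
  define L where "L = norm_laplacian K \<sigma> x n"
  define X where "X = x ` {..<n}"
  define Kd where "Kd = Ksig K \<sigma> (\<delta> l)"
  define KE where "KE m = Ksig_e K \<sigma> (set_dist_e (C m) (X - C m))" for m
  define Km where "Km = Max (KE ` {..<k})"
  have orth: "\<forall>a<n. \<forall>b<n. (\<Sum>i<n. U i a * U i b) = (if a = b then 1 else 0)"
   and eig: "\<forall>a<n. \<forall>i<n. (\<Sum>j<n. L i j * U j a) = lam a * U i a"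
   and sorted: "\<forall>a b. a \<le> b \<longrightarrow> b < n \<longrightarrow> lam a \<le> lam b"
    using U_eig by (auto simp: is_sorted_eigenbasis_def L_def)
  have A_pos: "A p q > 0" for p q
    unfolding A_def affinity_def Ksig_def using sigma_pos by (intro K_pos) simp
  have A_sym: "\<forall>p q. A p q = A q p"
    unfolding A_def affinity_def by (simp add: norm_minus_commute)
  have A_diag: "A p p = 1" for p
    unfolding A_def affinity_def Ksig_def by (simp add: K0)
  have dA: "\<forall>p<n. d p = (\<Sum>q<n. A p q)"
    by (simp add: d_def A_def degree_def)
  have d_ge1: "d p \<ge> 1" if "p < n" for p
  proof -
    have "A p p \<le> (\<Sum>q<n. A p q)"
      using that A_pos by (intro member_le_sum) (auto intro: less_imp_le)
    then show ?thesis using dA that A_diag by simp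
  qed
  have dpos: "\<forall>p<n. d p > 0" using d_ge1 by (auto intro: less_le_trans[of 0 1])
  have Ldef: "\<forall>i j. L i j = (if i = j then 1 else 0) - A i j / (sqrt (d i) * sqrt (d j))"
    by (simp add: L_def norm_laplacian_def A_def d_def)
  have Xfin: "finite X" by (simp add: X_def)
  have Cl_sub: "C m \<subseteq> X" if "m < k" for m using C_cover that by (auto simp: X_def)
  have KE_nonneg: "KE m \<ge> 0" if m: "m < k" for m
  proof (cases "X - C m = {}")
    case True
    then have "set_dist_e (C m) (X - C m) = \<infinity>" by (simp add: set_dist_e_def)
    then have "KE m = (INF y\<in>{0..}. K y)" by (simp add: KE_def Ksig_e_def)
    also have "\<dots> \<ge> 0" by (rule cINF_greatest) (auto intro: less_imp_le K_pos)
    finally show ?thesis .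
  next
    case False
    define r where "r = (INF pr\<in>C m \<times> (X - C m). dist (fst pr) (snd pr))"
    have "set_dist_e (C m) (X - C m) = ereal r" using False C_nonempty[OF m] by (simp add: set_dist_e_def r_def)
    then have KEr: "KE m = K (r / \<sigma>)" by (simp add: KE_def Ksig_e_def Ksig_def)
    have "r \<ge> 0" unfolding r_def using False C_nonempty[OF m] by (intro cINF_greatest) auto
    then have "K (r / \<sigma>) > 0" using sigma_pos by (intro K_pos) simp
    then show ?thesis using KEr by simp
  qed
  have KE_cross: "A p q \<le> KE m" if pq: "p < n" "q < n" "m < k" "x p \<in> C m" "x q \<notin> C m" for p q m
  proof -
    have ne: "X - C m \<noteq> {}" using pq by (auto simp: X_def)
    define r where "r = (INF pr\<in>C m \<times> (X - C m). dist (fst pr) (snd pr))"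
    have "set_dist_e (C m) (X - C m) = ereal r" using ne C_nonempty[OF pq(3)] by (simp add: set_dist_e_def r_def)
    then have KEr: "KE m = K (r / \<sigma>)" by (simp add: KE_def Ksig_e_def Ksig_def)
    have r0: "r \<ge> 0" unfolding r_def using ne C_nonempty[OF pq(3)] by (intro cINF_greatest) auto
    have "r \<le> dist (fst (x p, x q)) (snd (x p, x q))" unfolding r_def
      by (rule cINF_lower) (auto intro!: bdd_belowI2[where m=0] simp: pq X_def)
    then have "r \<le> norm (x p - x q)" by (simp add: dist_norm)
    then have "r / \<sigma> \<le> norm (x p - x q) / \<sigma>" using sigma_pos by (simp add: divide_right_mono)
    then have "K (norm (x p - x q) / \<sigma>) \<le> K (r / \<sigma>)" using r0 sigma_pos by (intro K_mono) auto
    then show ?thesis by (simp add: KEr A_def affinity_def Ksig_def)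
  qed
  have Km_ge: "KE m \<le> Km" if "m < k" for m
    unfolding Km_def using that by (intro Max_ge) auto
  obtain m0 where m0: "m0 < k" "KE m0 = Km"
  proof -
    have "Km \<in> KE ` {..<k}" unfolding Km_def using l_lt by (intro Max_in) auto
    then show ?thesis using that by auto
  qed
  have Km_nonneg: "Km \<ge> 0" using KE_nonneg m0 by metis
  have k_le_n: "k \<le> n"
  proof -
    define y where "y m = (SOME z. z \<in> C m)" for m
    have yC: "y m \<in> C m" if "m < k" for m using C_nonempty[OF that] unfolding y_def by (auto intro: someI_ex)
    have "inj_on y {..<k}"
    proof (rule inj_onI)
      fix m m' assume "m \<in> {..<k}" "m' \<in> {..<k}" "y m = y m'"
      then show "m = m'" using yC C_disjoint by (metis disjoint_iff lessThan_iff)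
    qed
    then have "k = card (y ` {..<k})" by (simp add: card_image)
    also have "\<dots> \<le> card X" using yC Cl_sub Xfin by (intro card_mono) auto
    also have "\<dots> \<le> n" unfolding X_def using card_image_le[of "{..<n}" x] by simp
    finally show ?thesis .
  qed
  define t where "t = k - 1"
  have t_lt: "t < n" "t < k" using k_le_n l_lt by (auto simp: t_def)
  have clus: "\<exists>m<k. x p \<in> C m" if "p < n" for p using C_cover that by (auto simp: X_def)
  have lam_t: "lam t \<le> 2 * real n * Km"
  proof -
    define B where "B m p = sqrt (d p) * (if x p \<in> C m then 1 else 0)" for m p
    define M where "M b m = (\<Sum>p<n. B m p * U p b)" for b m
    obtain c where c: "\<exists>m\<in>{..<k}. c m \<noteq> 0" "\<forall>b<t. (\<Sum>m\<in>{..<k}. M b m * c m) = 0"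
      using nontriv_sol[of "{..<k}" t M] t_lt by auto
    define h where "h p = (\<Sum>m<k. c m * (if x p \<in> C m then 1 else 0))" for p
    define g where "g p = sqrt (d p) * h p" for p
    have hval: "h p = c m" if hm: "m < k" "x p \<in> C m" for p m
    proof -
      have "h p = (\<Sum>m'<k. if m' = m then c m' else 0)"
        unfolding h_def using hm C_disjoint by (intro sum.cong) auto
      also have "\<dots> = c m" using hm by simp
      finally show ?thesis .
    qed
    have orthg: "\<forall>b<t. (\<Sum>j<n. g j * U j b) = 0"
    proof (intro allI impI)
      fix b assume b: "b < t"
      have "(\<Sum>j<n. g j * U j b) = (\<Sum>j<n. U j b * sqrt (d j) * (\<Sum>m<k. c m * (if x j \<in> C m then 1 else 0)))"
        by (simp add: g_def h_def mult_ac)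
      also have "\<dots> = (\<Sum>m<k. \<Sum>j<n. U j b * sqrt (d j) * (c m * (if x j \<in> C m then 1 else 0)))"
        by (rule dswap)
      also have "\<dots> = (\<Sum>m<k. M b m * c m)"
        by (simp add: M_def B_def sum_distrib_right sum_distrib_left mult_ac)
      also have "\<dots> = 0" using c(2) b by simp
      finally show "(\<Sum>j<n. g j * U j b) = 0" .
    qed
    have gnz: "(\<Sum>i<n. g i ^ 2) > 0"
    proof -
      obtain m1 where m1: "m1 < k" "c m1 \<noteq> 0" using c(1) by auto
      obtain z where "z \<in> C m1" using C_nonempty[OF m1(1)] by auto
      then obtain p where p: "p < n" "x p \<in> C m1" using Cl_sub[OF m1(1)] by (auto simp: X_def)
      have "d p > 0" using dpos p(1) by simp
      then have "g p \<noteq> 0" using hval[OF m1(1) p(2)] m1(2) by (simp add: g_def)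
      then have "g p ^ 2 > 0" by simp
      then show ?thesis using p(1) by (intro sum_pos2[of "{..<n}" p]) auto
    qed
    have low: "lam t * (\<Sum>i<n. g i ^ 2) \<le> (\<Sum>i<n. g i * (\<Sum>j<n. L i j * g j))"
      by (rule spectral_lower[OF orth eig sorted t_lt(1) orthg])
    have ghp: "g p / sqrt (d p) = h p" if "p < n" for p
    proof -
      have "d p > 0" using dpos that by simp
      then show ?thesis by (simp add: g_def)
    qed
    have ray: "(\<Sum>i<n. g i * (\<Sum>j<n. L i j * g j)) = (\<Sum>p<n. \<Sum>q<n. A p q * (h p - h q)^2) / 2"
    proof -
      have "(\<Sum>i<n. g i * (\<Sum>j<n. L i j * g j)) = (\<Sum>p<n. \<Sum>q<n. A p q * (g p / sqrt (d p) - g q / sqrt (d q))^2) / 2"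
        by (rule rayleigh[OF dA dpos A_sym Ldef])
      also have "\<dots> = (\<Sum>p<n. \<Sum>q<n. A p q * (h p - h q)^2) / 2"
        by (intro arg_cong[where f="\<lambda>z. z/2"] sum.cong refl) (simp add: ghp)
      finally show ?thesis .
    qed
    have pt: "A p q * (h p - h q)^2 \<le> 2 * Km * (h p ^ 2 + h q ^ 2)" if pq: "p < n" "q < n" for p q
    proof -
      obtain m where m: "m < k" "x p \<in> C m" using clus[OF pq(1)] by auto
      have "A p q * (h p - h q)^2 \<le> Km * (h p - h q)^2"
      proof (cases "x q \<in> C m")
        case True then have "h p = h q" using hval[OF m] hval[OF m(1) True] by simp
        then show ?thesis by simp
      next
        case False then have "A p q \<le> Km" using KE_cross[OF pq m(1) m(2) False] Km_ge[OF m(1)] by simp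
        then show ?thesis by (intro mult_right_mono) simp_all
      qed
      also have "\<dots> \<le> Km * (2 * (h p ^ 2 + h q ^ 2))"
      proof (intro mult_left_mono Km_nonneg)
        have e: "(h p - h q)^2 + (h p + h q)^2 = 2 * (h p ^ 2 + h q ^ 2)" by (simp add: power2_diff power2_sum)
        have "0 \<le> (h p + h q)^2" by simp
        then show "(h p - h q)^2 \<le> 2 * (h p ^ 2 + h q ^ 2)" using e by linarith
      qed
      finally show ?thesis by (simp add: mult_ac)
    qed
    have "(\<Sum>p<n. \<Sum>q<n. A p q * (h p - h q)^2) \<le> (\<Sum>p<n. \<Sum>q<n. 2 * Km * (h p ^ 2 + h q ^ 2))"
      using pt by (intro sum_mono) auto
    also have "\<dots> = 4 * Km * real n * (\<Sum>p<n. h p ^ 2)"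
      by (simp add: distrib_left sum.distrib sum_distrib_left mult_ac)
    also have "\<dots> \<le> 4 * Km * real n * (\<Sum>p<n. g p ^ 2)"
    proof (intro mult_left_mono sum_mono)
      fix p assume "p \<in> {..<n}"
      then have "d p \<ge> 1" using d_ge1 by simp
      then have "1 * h p ^ 2 \<le> d p * h p ^ 2" by (intro mult_right_mono) auto
      moreover have "(sqrt (d p))^2 = d p" using \<open>d p \<ge> 1\<close> by simp
      ultimately show "h p ^ 2 \<le> g p ^ 2" by (simp add: g_def power_mult_distrib)
    qed (use Km_nonneg in simp)
    finally have "lam t * (\<Sum>i<n. g i ^ 2) \<le> (2 * real n * Km) * (\<Sum>i<n. g i ^ 2)"
      using low ray by (simp add: mult_ac)
    then show ?thesis using gnz by (rule mult_right_le_imp_le)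
  qed
  define f where "f a p = U p a / sqrt (d p)" for a p
  define W where "W p q = (\<Sum>a<k. (f a p - f a q)^2)" for p q
  have energy: "(\<Sum>p<n. \<Sum>q<n. A p q * W p q) / 2 \<le> 2 * real n * real k * Km"
  proof -
    have ra: "(\<Sum>p<n. \<Sum>q<n. A p q * (f a p - f a q)^2) = 2 * lam a" if a: "a < n" for a
    proof -
      have "(\<Sum>i<n. U i a * (\<Sum>j<n. L i j * U j a)) = (\<Sum>p<n. \<Sum>q<n. A p q * (U p a / sqrt (d p) - U q a / sqrt (d q))^2) / 2"
        by (rule rayleigh[OF dA dpos A_sym Ldef])
      moreover have "(\<Sum>i<n. U i a * (\<Sum>j<n. L i j * U j a)) = lam a"
      proof -
        have "(\<Sum>i<n. U i a * (\<Sum>j<n. L i j * U j a)) = (\<Sum>i<n. lam a * (U i a * U i a))"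
          using eig a by (intro sum.cong) auto
        also have "\<dots> = lam a" using orth a by (simp add: sum_distrib_left[symmetric])
        finally show ?thesis .
      qed
      ultimately show ?thesis by (simp add: f_def)
    qed
    have "(\<Sum>p<n. \<Sum>q<n. A p q * W p q) = (\<Sum>p<n. \<Sum>q<n. \<Sum>a<k. A p q * (f a p - f a q)^2)"
      unfolding W_def by (simp add: sum_distrib_left)
    also have "\<dots> = (\<Sum>p<n. \<Sum>a<k. \<Sum>q<n. A p q * (f a p - f a q)^2)"
      by (rule sum.cong[OF refl]) (rule sum.swap)
    also have "\<dots> = (\<Sum>a<k. \<Sum>p<n. \<Sum>q<n. A p q * (f a p - f a q)^2)"
      by (rule sum.swap)
    also have "\<dots> = (\<Sum>a<k. 2 * lam a)" using ra k_le_n by (intro sum.cong) auto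
    also have "\<dots> \<le> (\<Sum>a<k. 2 * lam t)"
      using sorted t_lt by (intro sum_mono) (auto simp: t_def)
    also have "\<dots> = 2 * real k * lam t" by simp
    also have "\<dots> \<le> 2 * real k * (2 * real n * Km)" using lam_t by (intro mult_left_mono) auto
    finally show ?thesis by (simp add: mult_ac)
  qed
  define R where "R p q \<longleftrightarrow> p < n \<and> q < n \<and> x p \<in> C l \<and> x q \<in> C l \<and> dist (x p) (x q) \<le> \<delta> l" for p q
  have reach: "R\<^sup>*\<^sup>* i j"
  proof (rule ccontr)
    assume nr: "\<not> R\<^sup>*\<^sup>* i j"
    define S1 where "S1 = x ` {q. q < n \<and> R\<^sup>*\<^sup>* i q}"
    define S2 where "S2 = C l - S1"
    have S1_sub: "S1 \<subseteq> C l"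
    proof
      fix z assume "z \<in> S1"
      then obtain q where q: "z = x q" "R\<^sup>*\<^sup>* i q" unfolding S1_def by auto
      from q(2) show "z \<in> C l"
      proof (cases rule: rtranclp.cases)
        case rtrancl_refl then show ?thesis using q xi by simp
      next
        case (rtrancl_into_rtrancl b) then show ?thesis using q by (simp add: R_def)
      qed
    qed
    have S1_ne: "S1 \<noteq> {}" using i_lt unfolding S1_def by blast
    have S2_ne: "S2 \<noteq> {}"
    proof -
      have "x j \<notin> S1"
      proof
        assume "x j \<in> S1"
        then obtain q where q: "q < n" "R\<^sup>*\<^sup>* i q" "x j = x q" unfolding S1_def by auto
        then have "q = j" using x_distinct j_lt by (auto dest: inj_onD)
        then show False using q nr by simp
      qed
      then show ?thesis using xj by (auto simp: S2_def)
    qed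
    have part: "S1 \<union> S2 = C l" "S1 \<inter> S2 = {}" using S1_sub by (auto simp: S2_def)
    have "\<not> set_dist_e S1 S2 > ereal (\<delta> l)"
      using C_conn[OF l_lt] part S1_ne S2_ne unfolding connected_at_dist_def by blast
    moreover have "set_dist_e S1 S2 = ereal (INF pr\<in>S1 \<times> S2. dist (fst pr) (snd pr))"
      using S1_ne S2_ne by (simp add: set_dist_e_def)
    ultimately have le: "(INF pr\<in>S1 \<times> S2. dist (fst pr) (snd pr)) \<le> \<delta> l" by simp
    have fin: "finite (S1 \<times> S2)" using S1_sub Cl_sub[OF l_lt] Xfin
      by (intro finite_cartesian_product) (auto simp: S2_def intro: finite_subset)
    have "(INF pr\<in>S1 \<times> S2. dist (fst pr) (snd pr)) \<in> (\<lambda>pr. dist (fst pr) (snd pr)) ` (S1 \<times> S2)"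
      using fin S1_ne S2_ne by (intro inf_in_finite) auto
    then obtain a b where ab: "a \<in> S1" "b \<in> S2" "dist a b \<le> \<delta> l" using le by auto
    from ab(1) obtain q where q: "q < n" "R\<^sup>*\<^sup>* i q" "a = x q" unfolding S1_def by auto
    have "b \<in> X" using ab(2) Cl_sub[OF l_lt] by (auto simp: S2_def)
    then obtain p where p: "p < n" "b = x p" by (auto simp: X_def)
    have "R q p" unfolding R_def using q p ab S1_sub by (auto simp: S2_def)
    then have "R\<^sup>*\<^sup>* i p" using q(2) by simp
    then have "b \<in> S1" using p unfolding S1_def by auto
    then show False using ab(2) by (simp add: S2_def)
  qed
  then obtain ps where ps: "rtrancl_path R i ps j" "distinct (i # ps)"
    by (meson rtranclp_eq_rtrancl_path rtrancl_path_distinct)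
  define E where "E = set (zip (i # ps) ps)"
  have Eedge: "R (fst e) (snd e)" if "e \<in> E" for e
    using path_edges[OF ps(1)] that by (simp add: E_def)
  have len: "length ps \<le> n - 1"
  proof -
    have "set (i#ps) \<subseteq> {..<n}"
    proof
      fix y assume "y \<in> set (i#ps)"
      then consider "y = i" | "y \<in> set ps" by auto
      then show "y \<in> {..<n}"
      proof cases
        case 1 then show ?thesis using i_lt by simp
      next
        case 2 then have "Rangep R y" using rtrancl_path_Range[OF ps(1)] by blast
        then show ?thesis by (auto simp: R_def)
      qed
    qed
    then have "card (set (i#ps)) \<le> card {..<n}" by (intro card_mono) auto
    then have "length (i#ps) \<le> n" using distinct_card[OF ps(2)] by simp
    then show ?thesis by simp
  qed
  have path_bound: "(\<Sum>a<k. (f a i - f a j)^2) \<le> real (length ps) * (\<Sum>e\<in>E. W (fst e) (snd e))"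
  proof -
    have per: "(f a i - f a j)^2 \<le> real (length ps) * (\<Sum>e\<in>E. (f a (fst e) - f a (snd e))^2)" for a
      using path_cs[OF ps(1), of "f a"] distinct_zipI1[OF ps(2), of ps]
      by (simp add: E_def sum_list_distinct_conv_sum_set)
    have "(\<Sum>a<k. (f a i - f a j)^2) \<le> (\<Sum>a<k. real (length ps) * (\<Sum>e\<in>E. (f a (fst e) - f a (snd e))^2))"
      by (intro sum_mono per)
    also have "\<dots> = real (length ps) * (\<Sum>a<k. \<Sum>e\<in>E. (f a (fst e) - f a (snd e))^2)"
      by (simp add: sum_distrib_left)
    also have "(\<Sum>a<k. \<Sum>e\<in>E. (f a (fst e) - f a (snd e))^2) = (\<Sum>e\<in>E. \<Sum>a<k. (f a (fst e) - f a (snd e))^2)"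
      by (rule sum.swap)
    finally show ?thesis by (simp add: W_def)
  qed
  have edge_bound: "Kd * (\<Sum>e\<in>E. W (fst e) (snd e)) \<le> (\<Sum>p<n. \<Sum>q<n. A p q * W p q) / 2"
  proof -
    define AW where "AW e = A (fst e) (snd e) * W (fst e) (snd e)" for e
    have W0: "W p q \<ge> 0" for p q unfolding W_def by (intro sum_nonneg) simp
    have Wsym: "W p q = W q p" for p q unfolding W_def by (simp add: power2_commute)
    have AW0: "AW e \<ge> 0" for e unfolding AW_def using A_pos W0 by (simp add: less_imp_le)
    have Efin: "finite E" by (simp add: E_def)
    have Esub: "E \<subseteq> {..<n} \<times> {..<n}" using Eedge by (auto simp: R_def)
    have "Kd * (\<Sum>e\<in>E. W (fst e) (snd e)) = (\<Sum>e\<in>E. Kd * W (fst e) (snd e))" by (simp add: sum_distrib_left)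
    also have "\<dots> \<le> (\<Sum>e\<in>E. AW e)"
    proof (rule sum_mono)
      fix e assume e: "e \<in> E"
      then have Re: "R (fst e) (snd e)" by (rule Eedge)
      then have "norm (x (fst e) - x (snd e)) / \<sigma> \<le> \<delta> l / \<sigma>"
        using sigma_pos by (simp add: R_def dist_norm divide_right_mono)
      then have "Kd \<le> A (fst e) (snd e)" unfolding Kd_def A_def affinity_def Ksig_def
        using sigma_pos by (intro K_mono) auto
      then show "Kd * W (fst e) (snd e) \<le> AW e" unfolding AW_def using W0 by (intro mult_right_mono) auto
    qed
    also have "\<dots> \<le> (\<Sum>pq\<in>{..<n} \<times> {..<n}. AW pq) / 2"
    proof -
      have dis: "E \<inter> prod.swap ` E = {}"
      proof (rule ccontr)
        assume "E \<inter> prod.swap ` E \<noteq> {}"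
        then obtain p q where "(p,q) \<in> E" "(q,p) \<in> E" by auto
        then show False using zip_rev_notin[OF ps(2)] by (auto simp: E_def)
      qed
      have sw: "(\<Sum>e\<in>prod.swap ` E. AW e) = (\<Sum>e\<in>E. AW e)"
        by (subst sum.reindex) (auto simp: AW_def A_sym Wsym intro: inj_onI)
      have "2 * (\<Sum>e\<in>E. AW e) = (\<Sum>e\<in>E \<union> prod.swap ` E. AW e)"
        using dis Efin by (simp add: sum.union_disjoint sw)
      also have "\<dots> \<le> (\<Sum>pq\<in>{..<n} \<times> {..<n}. AW pq)"
        using Esub AW0 by (intro sum_mono2) auto
      finally show ?thesis by simp
    qed
    also have "(\<Sum>pq\<in>{..<n} \<times> {..<n}. AW pq) = (\<Sum>p<n. \<Sum>q<n. A p q * W p q)"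
      by (simp add: sum.cartesian_product AW_def split_beta)
    finally show ?thesis .
  qed
  have Kd_pos: "Kd > 0" unfolding Kd_def Ksig_def using delta_nonneg[OF l_lt] sigma_pos by (intro K_pos) simp
  define Q where "Q = (\<Sum>a<k. (f a i - f a j)^2)"
  have Q0: "Q \<ge> 0" unfolding Q_def by (intro sum_nonneg) simp
  have B0: "0 \<le> 2 * real n * real k * Km" using Km_nonneg by simp
  have "Kd * Q \<le> Kd * (real (length ps) * (\<Sum>e\<in>E. W (fst e) (snd e)))"
    using path_bound Kd_pos unfolding Q_def by (intro mult_left_mono) auto
  also have "\<dots> = real (length ps) * (Kd * (\<Sum>e\<in>E. W (fst e) (snd e)))" by simp
  also have "\<dots> \<le> real (length ps) * (2 * real n * real k * Km)"
    using edge_bound energy by (intro mult_left_mono) auto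
  also have "\<dots> \<le> real (n - 1) * (2 * real n * real k * Km)"
    using len B0 by (intro mult_right_mono) auto
  also have "\<dots> \<le> real n ^ 3 * real k * Km"
  proof -
    have n1: "n \<ge> 1" using i_lt by simp
    then have rn: "real (n - 1) = real n - 1" by simp
    have "0 \<le> (real n - 1)^2 + 1" by simp
    then have "2 * (real n - 1) \<le> real n ^ 2" by (simp add: power2_diff)
    then have "real n * (2 * (real n - 1)) \<le> real n * real n ^ 2" by (intro mult_left_mono) auto
    then have "real (n - 1) * (2 * real n) \<le> real n ^ 3" using rn by (simp add: power2_eq_square power3_eq_cube mult_ac)
    then have "real (n - 1) * (2 * real n) * (real k * Km) \<le> real n ^ 3 * (real k * Km)"
      using Km_nonneg by (intro mult_right_mono) auto
    then show ?thesis by (simp add: mult_ac)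
  qed
  finally have QB: "Q \<le> real n ^ 3 * real k * (Km / Kd)"
    using Kd_pos by (simp add: field_simps)
  have npos: "real n > 0" using i_lt by simp
  have p15: "real n powr 1.5 = sqrt (real n ^ 3)"
  proof -
    have "sqrt (real n ^ 3) = (real n ^ 3) powr (1/2)" by (simp add: powr_half_sqrt)
    also have "real n ^ 3 = real n powr 3" using powr_numeral[of "real n" "num.Bit1 num.One"] npos by simp
    also have "(real n powr 3) powr (1/2) = real n powr (3 * (1/2))" by (rule powr_powr)
    finally show ?thesis by simp
  qed
  have p05: "real k powr 0.5 = sqrt (real k)"
    by (simp add: powr_half_sqrt[symmetric])
  have "sqrt Q \<le> sqrt (real n ^ 3 * real k * (Km / Kd))" using QB by simp
  also have "\<dots> = real n powr 1.5 * real k powr 0.5 * sqrt (KE m0 / Kd)"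
    unfolding p15 p05 m0(2) by (simp only: real_sqrt_mult)
  also have "\<dots> \<le> Max ((\<lambda>m. real n powr 1.5 * real k powr 0.5 * sqrt (KE m / Kd)) ` {..<k})"
    using m0 by (intro Max_ge) auto
  finally show ?thesis by (simp add: Q_def f_def d_def KE_def X_def Kd_def)
qed

end
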